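(* Let $\mathcal{A}=\{a_1<\dots<a_k\}$ be a finite ordered alphabet and let $T$ be an interval exchange transformation on $[\ell,r)$ over $\mathcal{A}$ with permutation $\pi\in S_{\mathcal{A}}$. Then every return word in the language of $T$ is $\pi$-clustering for $\mathcal{A}$; that is, for every $w\in\mathcal{L}(T)$ and every $u\in\mathcal{R}(w)$, the word $u$ is $\pi$-clustering for $\mathcal{A}$.
   Context: An interval is a left-closed right-open real interval. A $k$-IET $T$ on $I=[\ell,r)$ over $\mathcal{A}$ is given by a partition of $I$ into intervals $(I_a)_{a\in\mathcal{A}}$ of positive length, with $I_a$ to the left of $I_b$ whenever $a<b$, together with a permutation $\pi$ of $\mathcal{A}$; it is defined by $T(x)=x+\tau_a$ for $x\in I_a$, where $\tau_a=\sum_{b:\,\pi^{-1}(b)<\pi^{-1}(a)}|I_b|-\sum_{b<a}|I_b|$ (so the image intervals $T(I_{\pi(a_1)}),\dots,T(I_{\pi(a_k)})$ appear from left to right). No minimality or regularity is assumed. The trajectory of $x\in I$ is the infinite word $\Omega_T(x)=w_0w_1w_2\cdots$ with $w_i=a$ iff $T^i(x)\in I_a$. The language $\mathcal{L}(T)$ is the set of all finite factors of all trajectories $\Omega_T(x)$, $x\in I$. For $w\in\mathcal{L}(T)$, the set of (left) return words is $\mathcal{R}(w)=\{u\in\mathcal{A}^*: uw\in(\mathcal{L}(T)\cap w\mathcal{A}^* )\setminus \mathcal{A}^+w\mathcal{A}^+\}$. For a word $v$ of length $n$ over $\mathcal{A}$, its Burrows–Wheeler transform $\mathrm{bwt}_{\mathcal{A}}(v)$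 is the word formed by the last letters of the $n$ cyclic rotations (conjugates) of $v$, listed in lexicographic order with respect to the order of $\mathcal{A}$. A word $v$ is $\pi$-clustering for $\mathcal{A}$ if $\mathrm{bwt}_{\mathcal{A}}(v)=\pi(a_1)^{k_1}\pi(a_2)^{k_2}\cdots\pi(a_k)^{k_k}$ where $k_i=|v|_{\pi(a_i)}$ is the number of occurrences of $\pi(a_i)$ in $v$. *)

theory Defs
  imports Complex_Main "HOL-Library.List_Lexorder"
begin

text \<open>An IET is given by the left endpoint l, the lengths
  lam :: 'a => real (all positive) and a permutation perm of the alphabet.\<close>

definition iet_left :: "real \<Rightarrow> ('a::{linorder,finite} \<Rightarrow> real) \<Rightarrow> 'a \<Rightarrow> real" where
  "iet_left l lam a = l + (\<Sum>b\<in>{b. b < a}. lam b)"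

definition iet_interval :: "real \<Rightarrow> ('a::{linorder,finite} \<Rightarrow> real) \<Rightarrow> 'a \<Rightarrow> real set" where
  "iet_interval l lam a = {iet_left l lam a ..< iet_left l lam a + lam a}"

definition iet_domain :: "real \<Rightarrow> ('a::{linorder,finite} \<Rightarrow> real) \<Rightarrow> real set" where
  "iet_domain l lam = {l ..< l + (\<Sum>b\<in>UNIV. lam b)}"

definition iet_tau :: "('a::{linorder,finite} \<Rightarrow> real) \<Rightarrow> ('a \<Rightarrow> 'a) \<Rightarrow> 'a \<Rightarrow> real" where
  "iet_tau lam perm a = (\<Sum>b\<in>{b. inv perm b < inv perm a}. lam b) - (\<Sum>b\<in>{b. b < a}. lam b)"

definition iet_letter :: "real \<Rightarrow> ('a::{linorder,finite} \<Rightarrow> real) \<Rightarrow> real \<Rightarrow> 'a" where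
  "iet_letter l lam x = (THE a. x \<in> iet_interval l lam a)"

definition iet_map :: "real \<Rightarrow> ('a::{linorder,finite} \<Rightarrow> real) \<Rightarrow> ('a \<Rightarrow> 'a) \<Rightarrow> real \<Rightarrow> real" where
  "iet_map l lam perm x = x + iet_tau lam perm (iet_letter l lam x)"

definition iet_traj :: "real \<Rightarrow> ('a::{linorder,finite} \<Rightarrow> real) \<Rightarrow> ('a \<Rightarrow> 'a) \<Rightarrow> real \<Rightarrow> nat \<Rightarrow> 'a" where
  "iet_traj l lam perm x i = iet_letter l lam ((iet_map l lam perm ^^ i) x)"

definition iet_language :: "real \<Rightarrow> ('a::{linorder,finite} \<Rightarrow> real) \<Rightarrow> ('a \<Rightarrow> 'a) \<Rightarrow> 'a list set" where
  "iet_language l lam perm =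
     {w. \<exists>x\<in>iet_domain l lam. \<exists>i. w = map (iet_traj l lam perm x) [i..<i + length w]}"

definition return_words :: "'a list set \<Rightarrow> 'a list \<Rightarrow> 'a list set" where
  "return_words L w =
     {u. u @ w \<in> L \<and> (\<exists>s. u @ w = w @ s) \<and>
         \<not> (\<exists>p s. p \<noteq> [] \<and> s \<noteq> [] \<and> u @ w = p @ w @ s)}"

definition bwt :: "'a::linorder list \<Rightarrow> 'a list" where
  "bwt v = map last (sort (map (\<lambda>i. rotate i v) [0..<length v]))"

definition pi_clustering :: "('a::{linorder,finite} \<Rightarrow> 'a) \<Rightarrow> 'a list \<Rightarrow> bool" where
  "pi_clustering perm v \<longleftrightarrow>
     bwt v = concat (map (\<lambda>a. replicate (count_list v (perm a)) (perm a))
                         (sorted_list_of_set (UNIV :: 'a set)))"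

end

theory Submission
  imports Defs "HOL-Library.Multiset"
begin

lemma sum_step:
  fixes lam :: "'a::finite \<Rightarrow> real" and r :: "'a \<Rightarrow> 'b::linorder"
  assumes pos: "\<And>a. lam a > 0" and "r a < r b"
  shows "(\<Sum>c\<in>{c. r c < r a}. lam c) + lam a \<le> (\<Sum>c\<in>{c. r c < r b}. lam c)"
proof -
  have "(\<Sum>c\<in>{c. r c < r a}. lam c) + lam a = (\<Sum>c\<in>insert a {c. r c < r a}. lam c)"
    by (simp add: sum.insert)
  also have "\<dots> \<le> (\<Sum>c\<in>{c. r c < r b}. lam c)"
    apply (rule sum_mono2) using assms by (auto intro: less_imp_le)
  finally show ?thesis .
qed

lemma sum_tot:
  fixes lam :: "'a::finite \<Rightarrow> real" and r :: "'a \<Rightarrow> 'b::linorder"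
  assumes pos: "\<And>a. lam a > 0"
  shows "(\<Sum>c\<in>{c. r c < r a}. lam c) + lam a \<le> (\<Sum>c\<in>UNIV. lam c)"
proof -
  have "(\<Sum>c\<in>{c. r c < r a}. lam c) + lam a = (\<Sum>c\<in>insert a {c. r c < r a}. lam c)"
    by (simp add: sum.insert)
  also have "\<dots> \<le> (\<Sum>c\<in>UNIV. lam c)"
    apply (rule sum_mono2) using assms by (auto intro: less_imp_le)
  finally show ?thesis .
qed

lemma sum_nonneg':
  fixes lam :: "'a::finite \<Rightarrow> real"
  assumes pos: "\<And>a. lam a > 0"
  shows "0 \<le> (\<Sum>c\<in>A. lam c)"
  using assms by (simp add: less_imp_le sum_nonneg)

lemma per_idx:
  assumes uw: "u @ w = w @ s0" and m: "0 < length u"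
  shows "n < length u + length w \<Longrightarrow> (u @ w) ! n = u ! (n mod length u)"
proof (induction n rule: less_induct)
  case (less n)
  show ?case
  proof (cases "n < length u")
    case True thus ?thesis by (simp add: nth_append)
  next
    case False
    hence "(u @ w) ! n = w ! (n - length u)" by (simp add: nth_append)
    also have "\<dots> = (w @ s0) ! (n - length u)"
    proof -
      have "n - length u < length w" using less.prems False by linarith
      thus ?thesis by (simp add: nth_append)
    qed
    also have "\<dots> = (u @ w) ! (n - length u)" using uw by simp
    also have "\<dots> = u ! ((n - length u) mod length u)"
    proof -
      have "n - length u < n" using m False by linarith
      moreover have "n - length u < length u + length w" using less.prems by linarith
      ultimately show ?thesis using less.IH[of "n - length u"] by blast
    qed
    also have "(n - length u) mod length u = n mod length u" using False by (simp add: le_mod_geq)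
    finally show ?thesis .
  qed
qed

lemma no_period:
  assumes uw: "u @ w = w @ s0"
    and nocc: "\<not> (\<exists>p s. p \<noteq> [] \<and> s \<noteq> [] \<and> u @ w = p @ w @ s)"
    and m: "m = length u"
    and j: "1 \<le> j" "j \<le> m" and j': "1 \<le> j'" "j' \<le> m" and jj: "j \<noteq> j'"
  shows "\<exists>t < m - j + length w. u ! ((j + t) mod m) \<noteq> u ! ((j' + t) mod m)"
proof (rule ccontr)
  assume "\<not> ?thesis"
  hence eq: "\<And>t. t < m - j + length w \<Longrightarrow> u ! ((j + t) mod m) = u ! ((j' + t) mod m)" by auto
  have m0: "0 < m" using j by auto
  define r where "r = (j' + m - j) mod m"
  have r0: "0 < r" "r < m"
  proof -
    show "r < m" using m0 by (simp add: r_def)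
    show "0 < r"
    proof (cases "j' < j")
      case True thus ?thesis using j j' by (simp add: r_def)
    next
      case False
      hence "j' + m - j = (j' - j) + m" using j by auto
      hence "r = (j' - j) mod m" by (simp add: r_def)
      also have "\<dots> = j' - j" using j j' by simp
      finally show ?thesis using False jj by simp
    qed
  qed
  have occ: "(u @ w) ! (r + s) = w ! s" if s: "s < length w" for s
  proof -
    have "(u @ w) ! (r + s) = u ! ((r + s) mod m)"
      using per_idx[OF uw] m0 m r0 s by auto
    also have "(r + s) mod m = (j' + (m - j + s)) mod m"
      using j by (simp add: r_def mod_add_left_eq add.assoc)
    also have "u ! \<dots> = u ! ((j + (m - j + s)) mod m)" using eq[of "m - j + s"] s by simp
    also have "j + (m - j + s) = m + s" using j by simp
    also have "(m + s) mod m = s mod m" by simp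
    also have "u ! (s mod m) = (u @ w) ! s" using per_idx[OF uw, of s] m0 m s by simp
    also have "\<dots> = w ! s" using uw s by (simp add: nth_append)
    finally show ?thesis .
  qed
  have lenuw: "length (u @ w) = m + length w" using m by simp
  define z where "z = u @ w"
  have lz: "length z = m + length w" using lenuw z_def by simp
  have occz: "z ! (r + s) = w ! s" if "s < length w" for s using occ that z_def by simp
  have "take (length w) (drop r z) = w"
  proof (rule nth_equalityI)
    show "length (take (length w) (drop r z)) = length w" using lz r0 by simp
    fix i assume "i < length (take (length w) (drop r z))"
    hence i: "i < length w" by simp
    have "take (length w) (drop r z) ! i = z ! (r + i)" using i lz r0 by simp
    thus "take (length w) (drop r z) ! i = w ! i" using occz[OF i] by simp
  qed
  hence "drop r (take (r + length w) z) = w" by (simp add: drop_take)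
  hence "take (r + length w) z = take r z @ w"
    by (metis append_take_drop_id take_take le_add1 min_absorb1)
  hence "z = take r z @ w @ drop (r + length w) z"
    by (metis append.assoc append_take_drop_id)
  moreover have "take r z \<noteq> []"
  proof -
    have "length (take r z) = r" using r0 lz by simp
    thus ?thesis using r0 by auto
  qed
  moreover have "drop (r + length w) z \<noteq> []" using r0 lz by simp
  ultimately show False using nocc z_def by blast
qed

lemma sorted_conc: "sorted xs \<Longrightarrow> sorted (concat (map (\<lambda>a. replicate (f a) a) xs))"
proof (induction xs)
  case Nil thus ?case by simp
next
  case (Cons x xs)
  have "\<forall>y\<in>set (concat (map (\<lambda>a. replicate (f a) a) xs)). x \<le> y" using Cons.prems by auto
  thus ?case using Cons by (auto simp: sorted_append)
qed

lemma mset_conc: "distinct xs \<Longrightarrow> mset (concat (map (\<lambda>a. replicate (f a) (g a)) xs)) = (\<Sum>a\<in>set xs. replicate_mset (f a) (g a))"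
  by (induction xs) (auto simp: sum.insert)

lemma mset_recon: "(\<Sum>b\<in>(UNIV::'a::finite set). replicate_mset (count M b) b) = M"
proof (rule multiset_eqI)
  fix x
  have "count (\<Sum>b\<in>(UNIV::'a set). replicate_mset (count M b) b) x = (\<Sum>b\<in>UNIV. if b = x then count M b else 0)"
    by (simp add: count_sum)
  also have "\<dots> = count M x" by simp
  finally show "count (\<Sum>b\<in>(UNIV::'a set). replicate_mset (count M b) b) x = count M x" .
qed

lemma mset_rot: "mset (rotate n xs) = mset xs"
proof -
  have "mset (rotate n xs) = mset (drop (n mod length xs) xs @ take (n mod length xs) xs)"
    by (simp only: rotate_drop_take)
  also have "\<dots> = mset (take (n mod length xs) xs @ drop (n mod length xs) xs)"
    by (simp only: mset_append add.commute)
  also have "\<dots> = mset xs" by (simp only: append_take_drop_id)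
  finally show ?thesis .
qed

lemma clustering_from_key:
  fixes u :: "'a::{linorder,finite} list" and perm :: "'a \<Rightarrow> 'a"
  assumes bij: "bij perm" and ne: "u \<noteq> []"
    and key: "\<And>i i'. i < length u \<Longrightarrow> i' < length u \<Longrightarrow>
       inv perm (last (rotate i' u)) < inv perm (last (rotate i u)) \<Longrightarrow> rotate i' u < rotate i u"
  shows "pi_clustering perm u"
proof -
  define rk where "rk = inv perm"
  have injrk: "inj rk" unfolding rk_def using bij bij_imp_bij_inv bij_is_inj by blast
  have injp: "inj perm" using bij bij_is_inj by blast
  define m where "m = length u"
  have m0: "0 < m" using ne by (simp add: m_def)
  define R where "R = sort (map (\<lambda>i. rotate i u) [0..<m])"
  have setR: "\<exists>i<m. x = rotate i u" if "x \<in> set R" for x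
    using that by (auto simp: R_def)
  have sR: "sorted R" by (simp add: R_def)
  have S1: "sorted_wrt (\<lambda>a b. rk (last a) \<le> rk (last b)) R"
  proof (rule sorted_wrt_mono_rel[OF _ sR])
    fix x y assume x: "x \<in> set R" and y: "y \<in> set R" and xy: "x \<le> y"
    show "rk (last x) \<le> rk (last y)"
    proof (rule ccontr)
      assume "\<not> rk (last x) \<le> rk (last y)"
      hence lt: "rk (last y) < rk (last x)" by auto
      obtain i where i: "i < m" "x = rotate i u" using setR[OF x] by blast
      obtain i' where i': "i' < m" "y = rotate i' u" using setR[OF y] by blast
      have "y < x" using key[of i i'] i i' lt by (simp add: m_def rk_def)
      thus False using xy by simp
    qed
  qed
  have S2: "sorted (map rk (map last R))" using S1 by (simp add: sorted_wrt_map)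
  have lastrot: "map last (map (\<lambda>i. rotate i u) [0..<m]) = rotate (m - 1) u"
  proof (rule nth_equalityI)
    show "length (map last (map (\<lambda>i. rotate i u) [0..<m])) = length (rotate (m - 1) u)"
      by (simp add: m_def)
    fix i assume "i < length (map last (map (\<lambda>i. rotate i u) [0..<m]))"
    hence i: "i < m" by simp
    have "last (rotate i u) = rotate i u ! (m - 1)"
      using ne by (simp add: last_conv_nth m_def)
    also have "\<dots> = u ! ((i + (m - 1)) mod m)" using m0 by (simp add: nth_rotate m_def)
    also have "\<dots> = rotate (m - 1) u ! i" using i by (simp add: nth_rotate m_def add.commute)
    finally show "map last (map (\<lambda>i. rotate i u) [0..<m]) ! i = rotate (m - 1) u ! i"
      using i by simp
  qed
  have M1: "mset (map last R) = mset u"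
  proof -
    have "mset (map last R) = mset (map last (map (\<lambda>i. rotate i u) [0..<m]))"
      unfolding R_def by (simp only: mset_map mset_sort)
    also have "\<dots> = mset (rotate (m - 1) u)" by (simp only: lastrot)
    finally show ?thesis by (simp add: mset_rot)
  qed
  define xs where "xs = sorted_list_of_set (UNIV :: 'a set)"
  define T0 where "T0 = concat (map (\<lambda>a. replicate (count_list u (perm a)) (perm a)) xs)"
  have mT0: "map rk T0 = concat (map (\<lambda>a. replicate (count_list u (perm a)) a) xs)"
    unfolding T0_def rk_def by (simp add: map_concat comp_def inv_f_f[OF injp])
  have S3: "sorted (map rk T0)" unfolding mT0 xs_def by (rule sorted_conc) simp
  have M2: "mset T0 = mset u"
  proof -
    have "mset T0 = (\<Sum>a\<in>set xs. replicate_mset (count_list u (perm a)) (perm a))"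
      unfolding T0_def by (rule mset_conc) (simp add: xs_def)
    also have "\<dots> = (\<Sum>a\<in>UNIV. replicate_mset (count (mset u) (perm a)) (perm a))"
      by (simp add: xs_def count_mset)
    also have "\<dots> = (\<Sum>b\<in>perm ` UNIV. replicate_mset (count (mset u) b) b)"
      using sum.reindex[OF injp, of "\<lambda>b. replicate_mset (count (mset u) b) b"] by simp
    also have "perm ` UNIV = UNIV" using bij by (simp add: bij_is_surj)
    also have "(\<Sum>b\<in>UNIV. replicate_mset (count (mset u) b) b) = mset u" by (rule mset_recon)
    finally show ?thesis .
  qed
  have "map rk (map last R) = map rk T0"
  proof -
    have "mset (map rk T0) = mset (map rk (map last R))" using M1 M2 by (simp only: mset_map)
    hence "sort (map rk (map last R)) = map rk T0" using S3 by (rule properties_for_sort)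
    moreover have "sort (map rk (map last R)) = map rk (map last R)" using S2 by (simp add: sorted_sort_id)
    ultimately show ?thesis by simp
  qed
  hence "map last R = T0" by (simp only: inj_map_eq_map[OF injrk])
  thus ?thesis unfolding pi_clustering_def bwt_def R_def T0_def xs_def m_def .
qed

locale IET =
  fixes l :: real and lam :: "'a::{linorder,finite} \<Rightarrow> real" and perm :: "'a \<Rightarrow> 'a"
  assumes pos: "\<And>a. lam a > 0" and bij: "bij perm"
begin

abbreviation "T \<equiv> iet_map l lam perm"
abbreviation "letter \<equiv> iet_letter l lam"
abbreviation "D \<equiv> iet_domain l lam"
abbreviation "rk \<equiv> inv perm"

lemma inj_rk: "inj rk"
  using bij bij_imp_bij_inv bij_is_inj by blast

lemma ex1_letter:
  assumes x: "x \<in> D"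
  shows "\<exists>!a. x \<in> iet_interval l lam a"
proof -
  define S where "S a = (\<Sum>c\<in>{c. c < a}. lam c)" for a
  have disj: "S a + lam a \<le> S b" if "a < b" for a b
    using sum_step[of lam id a b] pos that by (simp add: S_def)
  define M where "M = {a. l + S a \<le> x}"
  have "Min UNIV \<in> M"
  proof -
    have "{c. c < Min (UNIV::'a set)} = {}" using Min_le[of UNIV] by (auto simp: not_less[symmetric])
    hence "S (Min UNIV) = 0" unfolding S_def by (simp only: sum.empty)
    then show ?thesis using x unfolding M_def iet_domain_def by simp
  qed
  hence Mne: "M \<noteq> {}" by auto
  define a where "a = Max M"
  have aM: "a \<in> M" using Mne by (simp add: a_def)
  have "x < l + S a + lam a"
  proof (cases "\<exists>b. a < b")
    case True
    define b where "b = Min {b. a < b}"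
    have bin: "a < b" using True Min_in[of "{b. a < b}"] by (auto simp: b_def)
    have cle: "c \<le> a" if "c < b" for c
    proof (rule ccontr)
      assume "\<not> c \<le> a"
      hence "a < c" by auto
      hence "b \<le> c" by (simp add: b_def)
      thus False using \<open>c < b\<close> by simp
    qed
    have "{c. c < b} = insert a {c. c < a}"
      using cle bin by fastforce
    hence "S b = S a + lam a" by (simp add: S_def sum.insert)
    moreover have "b \<notin> M" using bin Max_ge[of M b] Mne by (auto simp: a_def)
    ultimately show ?thesis by (simp add: M_def)
  next
    case False
    hence "insert a {c. c < a} = UNIV" by (auto simp: not_less order.not_eq_order_implies_strict)
    hence "S a + lam a = (\<Sum>c\<in>UNIV. lam c)"
      by (metis S_def add.commute finite mem_Collect_eq order_less_irrefl sum.insert)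
    thus ?thesis using x by (simp add: iet_domain_def)
  qed
  hence ex: "x \<in> iet_interval l lam a" using aM
    by (simp add: iet_interval_def iet_left_def M_def S_def)
  show ?thesis
  proof (rule ex1I[where a=a])
    show "x \<in> iet_interval l lam a" by (rule ex)
  next
    fix b assume "x \<in> iet_interval l lam b"
    hence hb: "l + S b \<le> x" "x < l + S b + lam b" by (auto simp: iet_interval_def iet_left_def S_def)
    have ha: "l + S a \<le> x" "x < l + S a + lam a" using ex by (auto simp: iet_interval_def iet_left_def S_def)
    show "b = a"
    proof (rule ccontr)
      assume "b \<noteq> a"
      hence "a < b \<or> b < a" by auto
      thus False using disj[of a b] disj[of b a] ha hb by auto
    qed
  qed
qed

lemma letter_in: "x \<in> D \<Longrightarrow> x \<in> iet_interval l lam (letter x)"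
  unfolding iet_letter_def using ex1_letter by (rule theI')

lemma letter_eq: "x \<in> D \<Longrightarrow> x \<in> iet_interval l lam a \<Longrightarrow> letter x = a"
  using ex1_letter letter_in by blast

lemma T_bounds:
  assumes x: "x \<in> D"
  shows "l + (\<Sum>b\<in>{b. rk b < rk (letter x)}. lam b) \<le> T x"
    and "T x < l + (\<Sum>b\<in>{b. rk b < rk (letter x)}. lam b) + lam (letter x)"
proof -
  have "x \<in> iet_interval l lam (letter x)" using letter_in[OF x] .
  hence h: "l + (\<Sum>b\<in>{b. b < letter x}. lam b) \<le> x" "x < l + (\<Sum>b\<in>{b. b < letter x}. lam b) + lam (letter x)"
    by (auto simp: iet_interval_def iet_left_def)
  have "T x = x + ((\<Sum>b\<in>{b. rk b < rk (letter x)}. lam b) - (\<Sum>b\<in>{b. b < letter x}. lam b))"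
    by (simp add: iet_map_def iet_tau_def)
  thus "l + (\<Sum>b\<in>{b. rk b < rk (letter x)}. lam b) \<le> T x"
    "T x < l + (\<Sum>b\<in>{b. rk b < rk (letter x)}. lam b) + lam (letter x)"
    using h by linarith+
qed

lemma T_dom: "x \<in> D \<Longrightarrow> T x \<in> D"
  using T_bounds[of x] sum_tot[of lam rk "letter x"] sum_nonneg'[of lam "{b. rk b < rk (letter x)}"] pos
  by (force simp: iet_domain_def)

lemma funpow_dom: "x \<in> D \<Longrightarrow> (T ^^ n) x \<in> D"
  by (induction n) (auto intro: T_dom)

lemma letter_mono:
  assumes x: "x \<in> D" and y: "y \<in> D" and xy: "x < y"
  shows "letter x \<le> letter y"
proof (rule ccontr)
  assume "\<not> letter x \<le> letter y"
  hence "letter y < letter x" by auto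
  hence "(\<Sum>c\<in>{c. id c < id (letter y)}. lam c) + lam (letter y) \<le> (\<Sum>c\<in>{c. id c < id (letter x)}. lam c)"
    using sum_step[of lam id] pos by auto
  moreover have "x \<in> iet_interval l lam (letter x)" "y \<in> iet_interval l lam (letter y)"
    using letter_in x y by auto
  ultimately show False using xy by (auto simp: iet_interval_def iet_left_def)
qed

lemma T_order:
  assumes x: "x \<in> D" and y: "y \<in> D" and r: "rk (letter y) < rk (letter x)"
  shows "T y < T x"
  using T_bounds[OF x] T_bounds[OF y] sum_step[of lam rk "letter y" "letter x", OF pos r] by linarith

lemma diff_iter:
  assumes x: "x \<in> D" and y: "y \<in> D"
  shows "(\<forall>t<q. letter ((T^^t) x) = letter ((T^^t) y)) \<Longrightarrow> (T^^q) x - (T^^q) y = x - y"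
proof (induction q)
  case 0 thus ?case by simp
next
  case (Suc q)
  hence ih: "(T^^q) x - (T^^q) y = x - y" by auto
  have "letter ((T^^q) x) = letter ((T^^q) y)" using Suc.prems by auto
  moreover have "(T^^Suc q) x = (T^^q) x + iet_tau lam perm (letter ((T^^q) x))"
    "(T^^Suc q) y = (T^^q) y + iet_tau lam perm (letter ((T^^q) y))"
    by (simp_all only: funpow.simps comp_def iet_map_def)
  ultimately show ?case using ih by simp
qed

lemma traj_order:
  assumes x: "x \<in> D" and y: "y \<in> D" and yx: "y < x"
    and eq: "\<forall>t<q. letter ((T^^t) x) = letter ((T^^t) y)"
    and ne: "letter ((T^^q) x) \<noteq> letter ((T^^q) y)"
  shows "letter ((T^^q) y) < letter ((T^^q) x)"
proof -
  have "(T^^q) y < (T^^q) x" using diff_iter[OF x y eq] yx by linarith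
  hence "letter ((T^^q) y) \<le> letter ((T^^q) x)" using letter_mono funpow_dom x y by blast
  thus ?thesis using ne by auto
qed

lemma main:
  assumes uL: "u @ w \<in> iet_language l lam perm" and uw: "u @ w = w @ s0"
    and nocc: "\<not> (\<exists>p s. p \<noteq> [] \<and> s \<noteq> [] \<and> u @ w = p @ w @ s)"
  shows "pi_clustering perm u"
proof (cases "u = []")
  case True thus ?thesis by (simp add: pi_clustering_def bwt_def)
next
  case False
  define m where "m = length u"
  have m0: "0 < m" using False by (simp add: m_def)
  obtain x i0 where xD: "x \<in> D" and tr: "u @ w = map (iet_traj l lam perm x) [i0..<i0 + length (u @ w)]"
    using uL unfolding iet_language_def by blast
  define y where "y = (T^^i0) x"
  have yD: "y \<in> D" using funpow_dom[OF xD] by (simp add: y_def)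
  define P where "P n = (T^^n) y" for n
  have PD: "P n \<in> D" for n using funpow_dom[OF yD] by (simp add: P_def)
  have Padd: "P (n + t) = (T^^t) (P n)" for n t
    unfolding P_def by (simp only: funpow_add o_apply add.commute[of n t])
  have H: "letter (P n) = u ! (n mod m)" if n: "n < m + length w" for n
  proof -
    have "(u @ w) ! n = iet_traj l lam perm x (i0 + n)"
      using n m_def by (subst tr) simp
    also have "\<dots> = letter (P n)"
      unfolding iet_traj_def P_def y_def by (simp only: funpow_add o_apply add.commute[of i0 n])
    finally have "letter (P n) = (u @ w) ! n" by simp
    also have "\<dots> = u ! (n mod m)" using per_idx[OF uw] m0 n m_def by simp
    finally show ?thesis .
  qed
  show ?thesis
  proof (rule clustering_from_key[OF bij False])
    fix i i' assume i: "i < length u" and i': "i' < length u"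
      and lt: "rk (last (rotate i' u)) < rk (last (rotate i u))"
    define j where "j = (if i = 0 then m else i)"
    define j' where "j' = (if i' = 0 then m else i')"
    have j: "1 \<le> j" "j \<le> m" using i m0 by (auto simp: j_def m_def)
    have j': "1 \<le> j'" "j' \<le> m" using i' m0 by (auto simp: j'_def m_def)
    have rot: "rotate k u ! t = u ! ((jj + t) mod m)"
      if "t < m" "k < m" "jj = (if k = 0 then m else k)" for k t jj
      using that by (auto simp: nth_rotate m_def)
    have lastrot: "last (rotate k u) = u ! (jj - 1)"
      if "k < m" "jj = (if k = 0 then m else k)" for k jj
    proof -
      have "last (rotate k u) = rotate k u ! (m - 1)"
        using False by (simp add: last_conv_nth m_def)
      also have "\<dots> = u ! ((k + (m - 1)) mod m)" using m0 by (simp add: nth_rotate m_def)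
      also have "(k + (m - 1)) mod m = jj - 1"
      proof (cases "k = 0")
        case True thus ?thesis using that m0 by simp
      next
        case False
        hence e: "k + (m - 1) = (k - 1) + m" using m0 by simp
        have "(k + (m - 1)) mod m = ((k - 1) + m) mod m" by (simp only: e)
        also have "\<dots> = (k - 1) mod m" by (rule mod_add_self2)
        also have "\<dots> = k - 1" using that by simp
        finally show ?thesis using that False by simp
      qed
      finally show ?thesis .
    qed
    have li: "last (rotate i u) = u ! (j - 1)" using lastrot i j_def m_def by simp
    have li': "last (rotate i' u) = u ! (j' - 1)" using lastrot i' j'_def m_def by simp
    have "i \<noteq> i'" using lt by auto
    hence jj: "j \<noteq> j'" using i i' by (auto simp: j_def j'_def m_def)
    have Pj: "P j' < P j"
    proof -
      have a: "P j = T (P (j - 1))"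
      proof -
        have e: "j = Suc (j - 1)" using j by simp
        have "P j = P (Suc (j - 1))" using e by (rule arg_cong)
        also have "\<dots> = T (P (j - 1))" by (simp add: P_def)
        finally show ?thesis .
      qed
      have b: "P j' = T (P (j' - 1))"
      proof -
        have e: "j' = Suc (j' - 1)" using j' by simp
        have "P j' = P (Suc (j' - 1))" using e by (rule arg_cong)
        also have "\<dots> = T (P (j' - 1))" by (simp add: P_def)
        finally show ?thesis .
      qed
      have "letter (P (j - 1)) = u ! (j - 1)" using H[of "j - 1"] j by simp
      moreover have "letter (P (j' - 1)) = u ! (j' - 1)" using H[of "j' - 1"] j' by simp
      ultimately show ?thesis using T_order[OF PD PD] a b lt li li' by simp
    qed
    define Dif where "Dif t \<longleftrightarrow> u ! ((j + t) mod m) \<noteq> u ! ((j' + t) mod m)" for t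
    obtain t1 where t1: "t1 < m - j + length w" "Dif t1"
      using no_period[OF uw nocc m_def j j' jj] Dif_def by blast
    obtain t2 where t2: "t2 < m - j' + length w" "Dif t2"
      using no_period[OF uw nocc m_def j' j] jj Dif_def by fastforce
    have "\<exists>t<m. Dif t"
    proof (rule ccontr)
      assume "\<not> (\<exists>t<m. Dif t)"
      hence "\<not> Dif (t1 mod m)" using m0 by simp
      moreover have "(j + t1 mod m) mod m = (j + t1) mod m" "(j' + t1 mod m) mod m = (j' + t1) mod m"
        by (simp_all add: mod_add_right_eq)
      ultimately show False using t1 by (simp add: Dif_def)
    qed
    then obtain t3 where t3: "t3 < m" "Dif t3" by blast
    define q where "q = (LEAST t. Dif t)"
    have qD: "Dif q" unfolding q_def by (rule LeastI[of Dif, OF t3(2)])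
    have qle: "q \<le> t1" "q \<le> t2" "q \<le> t3" unfolding q_def
      by (rule Least_le[of Dif, OF t1(2)], rule Least_le[of Dif, OF t2(2)], rule Least_le[of Dif, OF t3(2)])
    have before: "\<not> Dif t" if "t < q" for t using that not_less_Least q_def by blast
    have ord: "letter ((T^^q) (P j')) < letter ((T^^q) (P j))"
    proof (rule traj_order[OF PD PD Pj])
      show "\<forall>t<q. letter ((T^^t) (P j)) = letter ((T^^t) (P j'))"
      proof (intro allI impI)
        fix t assume "t < q"
        hence "letter (P (j + t)) = letter (P (j' + t))"
          using H[of "j + t"] H[of "j' + t"] before[of t] qle t1 t2 j j' by (simp add: Dif_def)
        thus "letter ((T^^t) (P j)) = letter ((T^^t) (P j'))" by (simp add: Padd)
      qed
      have "letter (P (j + q)) \<noteq> letter (P (j' + q))"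
        using H[of "j + q"] H[of "j' + q"] qD qle t1 t2 j j' by (simp add: Dif_def)
      thus "letter ((T^^q) (P j)) \<noteq> letter ((T^^q) (P j'))" by (simp add: Padd)
    qed
    hence ordu: "u ! ((j' + q) mod m) < u ! ((j + q) mod m)"
      using H[of "j + q"] H[of "j' + q"] qle t1 t2 j j' by (simp add: Padd[symmetric])
    have qm: "q < m" using qle t3 by simp
    have r1: "rotate i u ! t = u ! ((j + t) mod m)" if "t < m" for t
      using rot[of t i j] that i j_def m_def by simp
    have r2: "rotate i' u ! t = u ! ((j' + t) mod m)" if "t < m" for t
      using rot[of t i' j'] that i' j'_def m_def by simp
    have tk: "take q (rotate i' u) = take q (rotate i u)"
    proof (rule nth_equalityI)
      show "length (take q (rotate i' u)) = length (take q (rotate i u))" by simp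
      fix t assume "t < length (take q (rotate i' u))"
      hence tq: "t < q" by simp
      thus "take q (rotate i' u) ! t = take q (rotate i u) ! t"
        using r1[of t] r2[of t] before[OF tq] qm by (simp add: Dif_def)
    qed
    have "(rotate i' u ! q, rotate i u ! q) \<in> {(a, b). a < b}"
      using r1 r2 qm ordu by simp
    hence "(rotate i' u, rotate i u) \<in> lexord {(a, b). a < b}"
      unfolding lexord_take_index_conv using tk qm m_def by auto
    thus "rotate i' u < rotate i u" by (simp add: list_less_def)
  qed
qed

end

theorem theorem6p1:
  fixes l :: real and lam :: "'a::{linorder,finite} \<Rightarrow> real" and perm :: "'a \<Rightarrow> 'a"
  assumes "\<And>a. lam a > 0"
    and "bij perm"
    and "w \<in> iet_language l lam perm"
    and "u \<in> return_words (iet_language l lam perm) w"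
  shows "pi_clustering perm u"
proof -
  interpret IET l lam perm using assms(1,2) by unfold_locales auto
  from assms(4) obtain s0 where "u @ w \<in> iet_language l lam perm" "u @ w = w @ s0"
    "\<not> (\<exists>p s. p \<noteq> [] \<and> s \<noteq> [] \<and> u @ w = p @ w @ s)"
    unfolding return_words_def by blast
  thus ?thesis by (rule main)
qed

end
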